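(* For integers $0\le s\le n$, \[ \operatorname{Cat}_{(2n+1-s,s)}=\sum_{i=0}^s \operatorname{Mot}_{(i+n-s,\,n-s)}\binom{n}{s-i},\qquad \operatorname{Cat}_{(2n-s,s)}=\sum_{i=0}^s \operatorname{Rior}_{(i+n-s,\,n-s)}\binom{n}{s-i}. \]
   Context: The Catalan triangle numbers are $\operatorname{Cat}_{(a,b)}=\binom{a+b}{b}-\binom{a+b}{b-1}$ for $0\le b\le a$ and $0$ otherwise. A Motzkin path is a lattice path with steps $U=(1,1)$, $H=(1,0)$, $D=(1,-1)$ starting at $(0,0)$ and staying weakly above the line $y=0$. The Motzkin triangle number $\operatorname{Mot}_{(a,k)}$ is the number of Motzkin paths from $(0,0)$ to $(a,k)$ (so $\operatorname{Mot}_{(a,a)}=1$ and $\operatorname{Mot}_{(a,0)}$ is the $a$-th Motzkin number). The Riordan triangle number $\operatorname{Rior}_{(a,k)}$ is the number of Motzkin paths from $(0,0)$ to $(a,k)$ having no $H$ step on the line $y=0$ (so $\operatorname{Rior}_{(a,a)}=1$, $\operatorname{Rior}_{(1,0)}=0$). *)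

theory Defs
  imports Main
begin

definition Cat :: "nat \<Rightarrow> nat \<Rightarrow> int" where
  "Cat a b = (if b \<le> a then
      int ((a + b) choose b) - (if b = 0 then 0 else int ((a + b) choose (b - 1)))
    else 0)"

text \<open>A lattice path is a list of steps: 1 = U, 0 = H, -1 = D.  The height after j steps is
  the sum of the first j steps.  A Motzkin path stays weakly above y = 0.\<close>
definition motzkin_paths :: "nat \<Rightarrow> int \<Rightarrow> int list set" where
  "motzkin_paths a k = {p. length p = a \<and> set p \<subseteq> {-1, 0, 1} \<and>
      (\<forall>j \<le> a. sum_list (take j p) \<ge> 0) \<and> sum_list p = k}"

definition Mot :: "nat \<Rightarrow> nat \<Rightarrow> nat" where
  "Mot a k = card (motzkin_paths a (int k))"

text \<open>Riordan: Motzkin paths with no H step on the line y = 0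
  (the j-th step, starting at height sum of first j steps, is not H at height 0).\<close>
definition Rior :: "nat \<Rightarrow> nat \<Rightarrow> nat" where
  "Rior a k = card {p \<in> motzkin_paths a (int k).
      \<forall>j < a. p ! j = 0 \<longrightarrow> sum_list (take j p) \<noteq> 0}"

end

theory Submission
  imports Defs
begin

lemma mp_fin: "finite (motzkin_paths j k)"
proof -
  have "motzkin_paths j k \<subseteq> {xs. set xs \<subseteq> {-1,0,1} \<and> length xs = j}"
    by (auto simp: motzkin_paths_def)
  moreover have "finite {xs::int list. set xs \<subseteq> {-1,0,1} \<and> length xs = j}"
    by (rule finite_lists_length_eq) simp
  ultimately show ?thesis by (rule finite_subset)
qed

lemma mp_neg: "k < 0 \<Longrightarrow> motzkin_paths j k = {}"
  by (auto simp: motzkin_paths_def)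

lemma sum_le_len: "set p \<subseteq> {-1,0,1} \<Longrightarrow> sum_list p \<le> int (length p)"
  by (induction p) auto

lemma mp_big: "k > int j \<Longrightarrow> motzkin_paths j k = {}"
  using sum_le_len by (fastforce simp: motzkin_paths_def)

lemma mp_0: "motzkin_paths 0 k = (if k = 0 then {[]} else {})"
  by (auto simp: motzkin_paths_def)

lemma mp_snoc: "(q@[x] \<in> motzkin_paths (Suc j) k) \<longleftrightarrow>
   (x \<in> {-1,0,1} \<and> q \<in> motzkin_paths j (k-x) \<and> k \<ge> 0)"
proof
  assume A: "q@[x] \<in> motzkin_paths (Suc j) k"
  then have len: "length q = j" and st: "set q \<subseteq> {-1,0,1}" "x \<in> {-1,0,1}"
    and pre: "\<forall>i\<le>Suc j. sum_list (take i (q@[x])) \<ge> 0" and s: "sum_list q + x = k"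
    by (auto simp: motzkin_paths_def)
  have "\<forall>i\<le>j. sum_list (take i q) \<ge> 0"
  proof (intro allI impI)
    fix i assume "i \<le> j"
    then have "sum_list (take i (q@[x])) \<ge> 0" using pre by simp
    then show "sum_list (take i q) \<ge> 0" using \<open>i\<le>j\<close> len by simp
  qed
  moreover have "k \<ge> 0" using pre[rule_format, of "Suc j"] len s by simp
  ultimately show "x \<in> {-1,0,1} \<and> q \<in> motzkin_paths j (k-x) \<and> k \<ge> 0"
    using len st s by (auto simp: motzkin_paths_def)
next
  assume B: "x \<in> {-1,0,1} \<and> q \<in> motzkin_paths j (k-x) \<and> k \<ge> 0"
  then have len: "length q = j" and st: "set q \<subseteq> {-1,0,1}" "x \<in> {-1,0,1}"
    and pre: "\<forall>i\<le>j. sum_list (take i q) \<ge> 0" and s: "sum_list q = k - x" and k: "k \<ge> 0"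
    by (auto simp: motzkin_paths_def)
  have "\<forall>i\<le>Suc j. sum_list (take i (q@[x])) \<ge> 0"
  proof (intro allI impI)
    fix i assume "i \<le> Suc j"
    then consider "i \<le> j" | "i = Suc j" by linarith
    then show "sum_list (take i (q@[x])) \<ge> 0"
    proof cases
      case 1 then show ?thesis using pre len by simp
    next
      case 2 then show ?thesis using s k len by simp
    qed
  qed
  then show "q@[x] \<in> motzkin_paths (Suc j) k"
    using len st s by (auto simp: motzkin_paths_def)
qed

lemma snoc_cases3:
  assumes "p \<in> motzkin_paths (Suc j) k"
  obtains q x where "p = q@[x]"
proof -
  from assms have "p \<noteq> []" by (auto simp: motzkin_paths_def)
  then show ?thesis using that by (metis rev_exhaust)
qed

lemma mp_Suc: assumes "k \<ge> 0"
  shows "motzkin_paths (Suc j) k = (\<lambda>q. q@[-1]) ` motzkin_paths j (k+1)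
     \<union> (\<lambda>q. q@[0]) ` motzkin_paths j k \<union> (\<lambda>q. q@[1]) ` motzkin_paths j (k-1)"
proof (intro equalityI subsetI)
  fix p assume p: "p \<in> motzkin_paths (Suc j) k"
  then obtain q x where qx: "p = q@[x]" by (rule snoc_cases3)
  with p have "x \<in> {-1,0,1} \<and> q \<in> motzkin_paths j (k-x)" using mp_snoc by blast
  then show "p \<in> (\<lambda>q. q@[-1]) ` motzkin_paths j (k+1)
     \<union> (\<lambda>q. q@[0]) ` motzkin_paths j k \<union> (\<lambda>q. q@[1]) ` motzkin_paths j (k-1)"
    using qx by auto
next
  fix p assume "p \<in> (\<lambda>q. q@[-1]) ` motzkin_paths j (k+1)
     \<union> (\<lambda>q. q@[0]) ` motzkin_paths j k \<union> (\<lambda>q. q@[1]) ` motzkin_paths j (k-1)"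
  then show "p \<in> motzkin_paths (Suc j) k" using mp_snoc assms by auto
qed

lemma card3:
  fixes A B C :: "int list set"
  assumes "finite A" "finite B" "finite C"
  shows "card ((\<lambda>q. q@[-1]) ` A \<union> (\<lambda>q. q@[0]) ` B \<union> (\<lambda>q. q@[1]) ` C)
     = card A + card B + card C"
proof -
  have i: "inj_on (\<lambda>q. q@[a]) X" for a :: int and X by (auto simp: inj_on_def)
  have "card ((\<lambda>q. q@[-1]) ` A \<union> (\<lambda>q. q@[0]) ` B \<union> (\<lambda>q. q@[1]) ` C)
     = card ((\<lambda>q. q@[-1]) ` A \<union> (\<lambda>q. q@[0]) ` B) + card ((\<lambda>q. q@[1]) ` C)"
    by (rule card_Un_disjoint) (use assms in auto)
  also have "card ((\<lambda>q. q@[-1]) ` A \<union> (\<lambda>q. q@[0]) ` B) = card ((\<lambda>q. q@[-1]) ` A) + card ((\<lambda>q. q@[0]) ` B)"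
    by (rule card_Un_disjoint) (use assms in auto)
  finally show ?thesis by (simp add: card_image[OF i])
qed

lemma mp_card_Suc: "k \<ge> 0 \<Longrightarrow> card (motzkin_paths (Suc j) k) =
  card (motzkin_paths j (k+1)) + card (motzkin_paths j k) + card (motzkin_paths j (k-1))"
  by (simp add: mp_Suc card3 mp_fin)

definition rset :: "nat \<Rightarrow> int \<Rightarrow> int list set" where
  "rset j k = {p \<in> motzkin_paths j k. \<forall>i < j. p ! i = 0 \<longrightarrow> sum_list (take i p) \<noteq> 0}"

lemma r_fin: "finite (rset j k)" using mp_fin by (simp add: rset_def)

lemma r_snoc: "(q@[x] \<in> rset (Suc j) k) \<longleftrightarrow>
   (x \<in> {-1,0,1} \<and> q \<in> rset j (k-x) \<and> k \<ge> 0 \<and> (x = 0 \<longrightarrow> k \<noteq> 0))"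
proof (cases "length q = j")
  case True
  have e: "(\<forall>i < Suc j. (q@[x]) ! i = 0 \<longrightarrow> sum_list (take i (q@[x])) \<noteq> 0)
     \<longleftrightarrow> (x = 0 \<longrightarrow> sum_list q \<noteq> 0) \<and> (\<forall>i<j. q ! i = 0 \<longrightarrow> sum_list (take i q) \<noteq> 0)"
    unfolding All_less_Suc using True by (auto simp: nth_append)
  show ?thesis unfolding rset_def mem_Collect_eq e mp_snoc
    by (auto simp: motzkin_paths_def)
next
  case False
  then show ?thesis by (auto simp: rset_def motzkin_paths_def)
qed

lemma r_Suc: assumes "k \<ge> 0"
  shows "rset (Suc j) k = (\<lambda>q. q@[-1]) ` rset j (k+1)
     \<union> (\<lambda>q. q@[0]) ` (if k = 0 then {} else rset j k) \<union> (\<lambda>q. q@[1]) ` rset j (k-1)"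
proof (intro equalityI subsetI)
  fix p assume p: "p \<in> rset (Suc j) k"
  then have "p \<in> motzkin_paths (Suc j) k" by (simp add: rset_def)
  then obtain q x where qx: "p = q@[x]" by (rule snoc_cases3)
  with p have "x \<in> {-1,0,1} \<and> q \<in> rset j (k-x) \<and> (x = 0 \<longrightarrow> k \<noteq> 0)" using r_snoc by blast
  then show "p \<in> (\<lambda>q. q@[-1]) ` rset j (k+1)
     \<union> (\<lambda>q. q@[0]) ` (if k = 0 then {} else rset j k) \<union> (\<lambda>q. q@[1]) ` rset j (k-1)"
    using qx by auto
next
  fix p assume "p \<in> (\<lambda>q. q@[-1]) ` rset j (k+1)
     \<union> (\<lambda>q. q@[0]) ` (if k = 0 then {} else rset j k) \<union> (\<lambda>q. q@[1]) ` rset j (k-1)"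
  then show "p \<in> rset (Suc j) k" using r_snoc assms by (auto split: if_splits)
qed

lemma r_card_Suc: "k \<ge> 0 \<Longrightarrow> card (rset (Suc j) k) =
  card (rset j (k+1)) + (if k = 0 then 0 else card (rset j k)) + card (rset j (k-1))"
  by (simp add: r_Suc card3 r_fin)

lemma r_neg: "k < 0 \<Longrightarrow> rset j k = {}" by (simp add: rset_def mp_neg)
lemma r_big: "k > int j \<Longrightarrow> rset j k = {}" by (simp add: rset_def mp_big)
lemma r_0: "rset 0 k = (if k = 0 then {[]} else {})" by (auto simp: rset_def mp_0)


definition bz :: "nat \<Rightarrow> int \<Rightarrow> int" where
  "bz m r = (if r < 0 then 0 else int (m choose nat r))"

lemma bz1: "bz (Suc m) r = bz m (r-1) + bz m r"
proof -
  consider "r < 0" | "r = 0" | "r > 0" by linarith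
  then show ?thesis
  proof cases
    case 3
    then have "nat r = Suc (nat (r-1))" by simp
    then show ?thesis using 3 by (simp add: bz_def)
  qed (auto simp: bz_def)
qed

lemma bz2: "bz (Suc (Suc m)) r = bz m (r-2) + 2 * bz m (r-1) + bz m r"
  by (simp add: bz1 algebra_simps)

lemma bz_sym1: "bz (2*n+1) (int n + 1) = bz (2*n+1) (int n)"
proof -
  have "(2*n+1) choose (n+1) = (2*n+1) choose ((2*n+1) - (n+1))"
    by (rule binomial_symmetric) simp
  then show ?thesis by (simp add: bz_def nat_add_distrib)
qed

lemma bz_sym2: "bz (2*n) (int n + 1) = bz (2*n) (int n - 1)"
proof (cases n)
  case 0 then show ?thesis by (simp add: bz_def)
next
  case (Suc m)
  have "(2*n) choose (n+1) = (2*n) choose ((2*n) - (n+1))"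
    by (rule binomial_symmetric) (simp add: Suc)
  moreover have "(2*n) - (n+1) = m" "nat (int n - 1) = m" using Suc by auto
  ultimately show ?thesis using Suc by (simp add: bz_def nat_add_distrib)
qed

lemma binsum: fixes f :: "nat \<Rightarrow> int"
  shows "(\<Sum>j\<le>Suc n. int (Suc n choose j) * f j) =
    (\<Sum>j\<le>n. int (n choose j) * f j) + (\<Sum>j\<le>n. int (n choose j) * f (Suc j))"
proof -
  have a: "(\<Sum>j\<le>Suc n. int (Suc n choose j) * f j) = f 0 + (\<Sum>j\<le>n. int (Suc n choose Suc j) * f (Suc j))"
    by (subst sum.atMost_Suc_shift) simp
  have b: "(\<Sum>j\<le>n. int (Suc n choose Suc j) * f (Suc j)) =
     (\<Sum>j\<le>n. int (n choose j) * f (Suc j)) + (\<Sum>j\<le>n. int (n choose Suc j) * f (Suc j))"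
    by (simp add: sum.distrib distrib_right)
  have c: "(\<Sum>j\<le>n. int (n choose j) * f j) = (\<Sum>j\<le>Suc n. int (n choose j) * f j)"
    by simp
  also have "\<dots> = f 0 + (\<Sum>j\<le>n. int (n choose Suc j) * f (Suc j))"
    by (subst sum.atMost_Suc_shift) simp
  finally show ?thesis using a b by simp
qed

definition MPi :: "nat \<Rightarrow> int \<Rightarrow> int" where "MPi j k = int (card (motzkin_paths j k))"
definition RPi :: "nat \<Rightarrow> int \<Rightarrow> int" where "RPi j k = int (card (rset j k))"

definition T :: "nat \<Rightarrow> int \<Rightarrow> int" where "T n k = (\<Sum>j\<le>n. int (n choose j) * MPi j k)"
definition S :: "nat \<Rightarrow> int \<Rightarrow> int" where "S n k = (\<Sum>j\<le>n. int (n choose j) * RPi j k)"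

definition g :: "nat \<Rightarrow> int \<Rightarrow> int" where
  "g n k = bz (2*n+1) (int n - k) - bz (2*n+1) (int n - k - 1)"
definition d :: "nat \<Rightarrow> int \<Rightarrow> int" where
  "d n k = bz (2*n) (int n - k) - bz (2*n) (int n - k - 1)"

lemma T_neg: "k < 0 \<Longrightarrow> T n k = 0" by (simp add: T_def MPi_def mp_neg)
lemma S_neg: "k < 0 \<Longrightarrow> S n k = 0" by (simp add: S_def RPi_def r_neg)

lemma T_Suc: "k \<ge> 0 \<Longrightarrow> T (Suc n) k = T n (k-1) + 2 * T n k + T n (k+1)"
proof -
  assume k: "k \<ge> 0"
  have "T (Suc n) k = T n k + (\<Sum>j\<le>n. int (n choose j) * MPi (Suc j) k)"
    unfolding T_def by (rule binsum)
  also have "(\<Sum>j\<le>n. int (n choose j) * MPi (Suc j) k) = T n (k+1) + T n k + T n (k-1)"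
    unfolding T_def MPi_def mp_card_Suc[OF k]
    by (simp add: sum.distrib distrib_left)
  finally show ?thesis by simp
qed

lemma S_Suc: "k \<ge> 0 \<Longrightarrow> S (Suc n) k = S n (k-1) + (if k = 0 then 1 else 2) * S n k + S n (k+1)"
proof -
  assume k: "k \<ge> 0"
  have "S (Suc n) k = S n k + (\<Sum>j\<le>n. int (n choose j) * RPi (Suc j) k)"
    unfolding S_def by (rule binsum)
  also have "(\<Sum>j\<le>n. int (n choose j) * RPi (Suc j) k) = S n (k+1) + (if k = 0 then 0 else S n k) + S n (k-1)"
    unfolding S_def RPi_def r_card_Suc[OF k]
    by (simp add: sum.distrib distrib_left)
  finally show ?thesis by simp
qed

lemma g_m1: "g n (-1) = 0" using bz_sym1[of n] by (simp add: g_def)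
lemma d_m1: "d n (-1) = - d n 0" using bz_sym2[of n] by (simp add: d_def)

lemma g_Suc: "g (Suc n) k = g n (k-1) + 2 * g n k + g n (k+1)"
proof -
  have e: "2 * Suc n + 1 = Suc (Suc (2*n+1))" by simp
  show ?thesis unfolding g_def e bz2
    by (simp add: algebra_simps)
qed

lemma d_Suc: "d (Suc n) k = d n (k-1) + 2 * d n k + d n (k+1)"
proof -
  have e: "2 * Suc n = Suc (Suc (2*n))" by simp
  show ?thesis unfolding d_def e bz2
    by (simp add: algebra_simps)
qed

lemma T_eq: "k \<ge> -1 \<Longrightarrow> T n k = g n k"
proof (induction n arbitrary: k)
  case 0
  consider "k = -1" | "k = 0" | "k \<ge> 1" using 0 by linarith
  then show ?case
    by cases (auto simp: T_def MPi_def mp_0 g_def bz_def)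
next
  case (Suc n)
  show ?case
  proof (cases "k = -1")
    case True then show ?thesis using T_neg g_m1 by simp
  next
    case False
    then have k: "k \<ge> 0" using Suc.prems by simp
    show ?thesis using T_Suc[OF k] g_Suc Suc.IH k by simp
  qed
qed

lemma S_eq: "k \<ge> 0 \<Longrightarrow> S n k = d n k"
proof (induction n arbitrary: k)
  case 0
  consider "k = 0" | "k \<ge> 1" using 0 by linarith
  then show ?case
    by cases (auto simp: S_def RPi_def r_0 d_def bz_def)
next
  case (Suc n)
  show ?case
  proof (cases "k = 0")
    case True then show ?thesis using S_Suc[of 0 n] S_neg[of "-1" n] d_Suc[of n 0] d_m1[of n] Suc.IH by simp
  next
    case False
    then have k: "k \<ge> 1" using Suc.prems by simp
    show ?thesis using S_Suc[of k n] g_Suc d_Suc Suc.IH k by simp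
  qed
qed


lemma reidx: fixes f :: "nat \<Rightarrow> int"
  assumes sn: "s \<le> n" and z: "\<And>j. j < n - s \<Longrightarrow> f j = 0"
  shows "(\<Sum>i=0..s. f (i+n-s) * int (n choose (s-i))) = (\<Sum>j\<le>n. int (n choose j) * f j)"
proof -
  have "(\<Sum>j\<le>n. int (n choose j) * f j) = (\<Sum>j=n-s..n. int (n choose j) * f j)"
    by (rule sum.mono_neutral_right) (use z in auto)
  also have "\<dots> = (\<Sum>i=0..s. int (n choose (i+(n-s))) * f (i+(n-s)))"
    using sum.shift_bounds_cl_nat_ivl[of "\<lambda>j. int (n choose j) * f j" 0 "n-s" s] sn by simp
  also have "\<dots> = (\<Sum>i=0..s. f (i+n-s) * int (n choose (s-i)))"
  proof (rule sum.cong)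
    fix i assume "i \<in> {0..s}"
    then have i: "i \<le> s" by simp
    have "n choose (i+(n-s)) = n choose (n - (i+(n-s)))"
      by (rule binomial_symmetric) (use i sn in simp)
    moreover have "n - (i+(n-s)) = s - i" "i+(n-s) = i+n-s" using i sn by auto
    ultimately show "int (n choose (i+(n-s))) * f (i+(n-s)) = f (i+n-s) * int (n choose (s-i))"
      by simp
  qed simp
  finally show ?thesis by simp
qed

lemma mot_part:
  fixes n s :: nat
  assumes "s \<le> n"
  shows "Cat (2 * n + 1 - s) s =
           (\<Sum>i = 0..s. int (Mot (i + n - s) (n - s)) * int (n choose (s - i)))"
proof -
  have m: "int (Mot a k) = MPi a (int k)" for a k by (simp add: Mot_def MPi_def)
  have "(\<Sum>i = 0..s. int (Mot (i + n - s) (n - s)) * int (n choose (s - i)))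
       = (\<Sum>j\<le>n. int (n choose j) * MPi j (int (n-s)))"
    unfolding m by (rule reidx[OF assms]) (simp add: MPi_def mp_big)
  also have "\<dots> = g n (int (n-s))" using T_eq[of "int (n-s)" n] by (simp add: T_def)
  also have "\<dots> = Cat (2 * n + 1 - s) s"
    using assms by (auto simp: g_def Cat_def bz_def nat_diff_distrib)
  finally show ?thesis by simp
qed

lemma rior_part:
  fixes n s :: nat
  assumes "s \<le> n"
  shows "Cat (2 * n - s) s =
           (\<Sum>i = 0..s. int (Rior (i + n - s) (n - s)) * int (n choose (s - i)))"
proof -
  have r: "int (Rior a k) = RPi a (int k)" for a k by (simp add: Rior_def RPi_def rset_def)
  have "(\<Sum>i = 0..s. int (Rior (i + n - s) (n - s)) * int (n choose (s - i)))
       = (\<Sum>j\<le>n. int (n choose j) * RPi j (int (n-s)))"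
    unfolding r by (rule reidx[OF assms]) (simp add: RPi_def r_big)
  also have "\<dots> = d n (int (n-s))" using S_eq[of "int (n-s)" n] by (simp add: S_def)
  also have "\<dots> = Cat (2 * n - s) s"
    using assms by (auto simp: d_def Cat_def bz_def nat_diff_distrib)
  finally show ?thesis by simp
qed

theorem proposition5p15:
  fixes n s :: nat
  assumes "s \<le> n"
  shows "Cat (2 * n + 1 - s) s =
           (\<Sum>i = 0..s. int (Mot (i + n - s) (n - s)) * int (n choose (s - i)))
       \<and> Cat (2 * n - s) s =
           (\<Sum>i = 0..s. int (Rior (i + n - s) (n - s)) * int (n choose (s - i)))"
  using mot_part[OF assms] rior_part[OF assms] by (rule conjI)

end
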